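(* Let $n\geq 0$ and $0\leq l\leq n$ be integers. Then, as an identity of rational functions in $q,z,x$, \[ \sum_{k=0}^{n}{n\brack k}\frac{(q/z;q)_k (zq^{-l};q)_{n-k}}{1-xq^k}z^k =\frac{(q;q)_n(xz;q)_{n-l}(zq^{-l};q)_l}{(x;q)_{n+1}}. \]
   Context: For $N\geq 0$, $(x;q)_N=(1-x)(1-xq)\cdots(1-xq^{N-1})$ (with $(x;q)_0=1$). The $q$-binomial coefficient is ${n\brack k}=\frac{(q;q)_n}{(q;q)_k(q;q)_{n-k}}$ for $0\leq k\leq n$ and $0$ otherwise. *)

theory Defs
  imports Main
begin

definition qpoch :: "'a::field \<Rightarrow> 'a \<Rightarrow> nat \<Rightarrow> 'a" where
  "qpoch x q N = (\<Prod>i<N. (1 - x * q ^ i))"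

definition qbinom :: "'a::field \<Rightarrow> nat \<Rightarrow> nat \<Rightarrow> 'a" where
  "qbinom q n k = (if k \<le> n then qpoch q q n / (qpoch q q k * qpoch q q (n - k)) else 0)"

end

theory Submission
  imports Defs "HOL-Computational_Algebra.Polynomial"
begin

lemma qpoch_add: "qpoch a q (s + t) = qpoch a q s * qpoch (a * q ^ s) q t"
  by (induction t) (simp_all add: qpoch_def power_add mult_ac)

lemma qpoch_key:
  fixes q z :: "'a::field"
  assumes "q \<noteq> 0" "m \<le> n" "l \<le> n"
  shows "qpoch (z / q ^ m) q m * qpoch (z / q ^ l) q (n - m)
       = qpoch (z / q ^ m) q (n - l) * qpoch (z / q ^ l) q l"
proof (cases "l \<le> m")
  case True
  define A where "A = z / q ^ m"
  have e: "z / q ^ l = A * q ^ (m - l)"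
    using assms True by (simp add: A_def power_diff field_simps)
  have 1: "qpoch A q m = qpoch A q (m - l) * qpoch (z / q ^ l) q l"
    using qpoch_add[of A q "m-l" l] True e by simp
  have 2: "qpoch A q (n - l) = qpoch A q (m - l) * qpoch (z / q ^ l) q (n - m)"
    using qpoch_add[of A q "m-l" "n-m"] True assms e by simp
  show ?thesis unfolding A_def[symmetric] using 1 2 by (simp add: mult_ac)
next
  case False
  define B where "B = z / q ^ l"
  have e: "z / q ^ m = B * q ^ (l - m)"
    using assms False by (simp add: B_def power_diff field_simps)
  have 1: "qpoch B q l = qpoch B q (l - m) * qpoch (z / q ^ m) q m"
    using qpoch_add[of B q "l-m" m] False e by simp
  have 2: "qpoch B q (n - m) = qpoch B q (l - m) * qpoch (z / q ^ m) q (n - l)"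
    using qpoch_add[of B q "l-m" "n-l"] False assms e by simp
  show ?thesis unfolding B_def[symmetric] using 1 2 by (simp add: mult_ac)
qed

lemma factor_id:
  fixes t z :: "'a::field"
  assumes "t \<noteq> 0" "t \<noteq> 1" "z \<noteq> 0"
  shows "(1 - 1 / t) * ((1 - t / z) * z / (1 - t)) = 1 - z / t"
  using assms by (simp add: field_simps)

lemma degree_prod_lin:
  fixes c :: "'b \<Rightarrow> 'a::field"
  assumes "finite S"
  shows "degree (\<Prod>i\<in>S. [:1, c i:]) \<le> card S"
  using assms
proof (induction S rule: finite_induct)
  case (insert x F)
  have "degree (\<Prod>i\<in>insert x F. [:1, c i:]) \<le> degree [:1, c x:] + degree (\<Prod>i\<in>F. [:1, c i:])"
    unfolding prod.insert[OF insert(1,2)] by (rule degree_mult_le)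
  also have "\<dots> \<le> 1 + card F" using insert by (simp add: degree_pCons_le)
  finally show ?case using insert by simp
qed simp

lemma pow_shift:
  fixes q :: "'a::field"
  assumes "q \<noteq> 0" "Suc m \<le> a"
  shows "q * q ^ (a - Suc m) = q ^ a / q ^ m"
proof -
  obtain d where "a = Suc m + d" using assms le_Suc_ex by blast
  then show ?thesis using assms by (simp add: power_add)
qed

lemma qpow_ne1:
  fixes q :: "'a::field"
  assumes "qpoch q q n \<noteq> 0" "1 \<le> a" "a \<le> n"
  shows "q ^ a \<noteq> 1"
proof
  assume h: "q ^ a = 1"
  have "a - 1 < n" using assms by simp
  moreover have "1 - q * q ^ (a - 1) = 0" using h assms(2) by (cases a) auto
  ultimately have "qpoch q q n = 0" unfolding qpoch_def
    by (intro prod_zero) auto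
  with assms show False by simp
qed

lemma qpochqq_ne0:
  fixes q :: "'a::field"
  assumes "qpoch q q n \<noteq> 0" "m \<le> n"
  shows "qpoch q q m \<noteq> 0"
proof -
  have "qpoch q q n = qpoch q q m * qpoch (q * q ^ m) q (n - m)"
    using qpoch_add[of q q m "n - m"] assms by simp
  with assms show ?thesis by auto
qed

lemma residue:
  fixes q z :: "'a::field"
  assumes q: "q \<noteq> 0" and z: "z \<noteq> 0" and mn: "m \<le> n" and ln: "l \<le> n"
    and Qn: "qpoch q q n \<noteq> 0"
  shows "qbinom q n m * (qpoch (q / z) q m * qpoch (z / q ^ l) q (n - m)) * z ^ m
          * (\<Prod>j\<in>{0..n}-{m}. (1 - q ^ j / q ^ m))
        = qpoch q q n * qpoch (z / q ^ m) q (n - l) * qpoch (z / q ^ l) q l"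
proof -
  have Qm: "qpoch q q m \<noteq> 0" using qpochqq_ne0[OF Qn mn] .
  have Qnm: "qpoch q q (n - m) \<noteq> 0" using qpochqq_ne0[OF Qn] by simp
  have split: "{0..n}-{m} = {..<m} \<union> {Suc m..n}" using mn by auto
  have P: "(\<Prod>j\<in>{0..n}-{m}. (1 - q ^ j / q ^ m :: 'a))
      = (\<Prod>j<m. (1 - q ^ j / q ^ m)) * (\<Prod>j\<in>{Suc m..n}. (1 - q ^ j / q ^ m))"
    unfolding split by (rule prod.union_disjoint) auto
  have P2: "(\<Prod>j\<in>{Suc m..n}. (1 - q ^ j / q ^ m)) = qpoch q q (n - m)"
    unfolding qpoch_def
    apply (rule prod.reindex_bij_witness[of _ "\<lambda>i. i + Suc m" "\<lambda>j. j - Suc m"])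
    using q by (auto simp: power_add pow_shift)
  define g where "g i = (1 - q / z * q ^ i) * z / (1 - q * q ^ i)" for i
  have G: "qpoch (q / z) q m * z ^ m / qpoch q q m = (\<Prod>i<m. g i)"
    unfolding g_def qpoch_def by (simp add: prod.distrib prod_dividef)
  have G2: "(\<Prod>i<m. g i) = (\<Prod>j<m. g (m - Suc j))"
    by (rule prod.nat_diff_reindex[symmetric])
  have P1: "(\<Prod>j<m. (1 - q ^ j / q ^ m)) * (\<Prod>i<m. g i) = qpoch (z / q ^ m) q m"
    unfolding G2 qpoch_def prod.distrib[symmetric]
  proof (rule prod.cong[OF refl])
    fix j assume j: "j \<in> {..<m}"
    define a where "a = m - j"
    have a1: "1 \<le> a" "a \<le> n" using j mn by (auto simp: a_def)
    have qm: "q ^ m = q ^ j * q ^ a" using j by (simp add: a_def power_add[symmetric])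
    have qa: "q * q ^ (m - Suc j) = q ^ a" using j by (simp add: a_def power_Suc[symmetric] Suc_diff_Suc)
    have "(1 - q ^ j / q ^ m) * g (m - Suc j) = (1 - 1 / q ^ a) * ((1 - q ^ a / z) * z / (1 - q ^ a))"
      unfolding g_def using q by (simp add: qm mult.assoc[symmetric] qa) 
    also have "\<dots> = 1 - z / q ^ a"
      by (rule factor_id) (use q z qpow_ne1[OF Qn a1] in auto)
    also have "\<dots> = 1 - z / q ^ m * q ^ j" using q by (simp add: qm)
    finally show "(1 - q ^ j / q ^ m) * g (m - Suc j) = 1 - z / q ^ m * q ^ j" .
  qed
  have "qbinom q n m * (qpoch (q / z) q m * qpoch (z / q ^ l) q (n - m)) * z ^ m
          * (\<Prod>j\<in>{0..n}-{m}. (1 - q ^ j / q ^ m))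
      = qpoch q q n * qpoch (z / q ^ l) q (n - m) *
        ((\<Prod>j<m. (1 - q ^ j / q ^ m)) * (qpoch (q / z) q m * z ^ m / qpoch q q m))"
    unfolding P P2 qbinom_def using mn Qm Qnm by (simp add: field_simps)
  also have "\<dots> = qpoch q q n * (qpoch (z / q ^ m) q m * qpoch (z / q ^ l) q (n - m))"
    unfolding G P1 by simp
  also have "\<dots> = qpoch q q n * qpoch (z / q ^ m) q (n - l) * qpoch (z / q ^ l) q l"
    using qpoch_key[OF q mn ln, of z] by simp
  finally show ?thesis .
qed

theorem lemma2p1:
  fixes q z x :: "'a::field" and n l :: nat
  assumes "l \<le> n" and "q \<noteq> 0" and "z \<noteq> 0"
    and "qpoch q q n \<noteq> 0" and "qpoch x q (Suc n) \<noteq> 0"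
  shows "(\<Sum>k=0..n. qbinom q n k * (qpoch (q / z) q k * qpoch (z / q ^ l) q (n - k))
            / (1 - x * q ^ k) * z ^ k)
         = qpoch q q n * qpoch (x * z) q (n - l) * qpoch (z / q ^ l) q l / qpoch x q (Suc n)"
proof -
  note ln = assms(1) and q = assms(2) and z = assms(3) and Qn = assms(4) and Xn = assms(5)
  define c where "c k = qbinom q n k * (qpoch (q / z) q k * qpoch (z / q ^ l) q (n - k)) * z ^ k" for k
  define L where "L = (\<Sum>k\<in>{0..n}. smult (c k) (\<Prod>j\<in>{0..n}-{k}. [:1, -(q ^ j):]))"
  define R where "R = smult (qpoch q q n * qpoch (z / q ^ l) q l) (\<Prod>i\<in>{..<n-l}. [:1, -(z * q ^ i):])"
  have polyL: "poly L y = (\<Sum>k\<in>{0..n}. c k * (\<Prod>j\<in>{0..n}-{k}. (1 - y * q ^ j)))" for y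
    unfolding L_def by (simp add: poly_sum poly_prod)
  have polyR: "poly R y = qpoch q q n * qpoch (z / q ^ l) q l * (\<Prod>i\<in>{..<n-l}. (1 - y * (z * q ^ i)))" for y
    unfolding R_def by (simp add: poly_prod)
  have degL: "degree L \<le> n"
    unfolding L_def
  proof (rule degree_sum_le)
    fix k assume k: "k \<in> {0..n}"
    have "degree (smult (c k) (\<Prod>j\<in>{0..n}-{k}. [:1, -(q ^ j):])) \<le> degree (\<Prod>j\<in>{0..n}-{k}. [:1, -(q ^ j):])"
      by (rule degree_smult_le)
    also have "\<dots> \<le> card ({0..n}-{k})" by (rule degree_prod_lin) simp
    also have "\<dots> \<le> n" using k by simp
    finally show "degree (smult (c k) (\<Prod>j\<in>{0..n}-{k}. [:1, -(q ^ j):])) \<le> n" .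
  qed simp
  have degR: "degree R \<le> n"
  proof -
    have "degree R \<le> degree (\<Prod>i\<in>{..<n-l}. [:1, -(z * q ^ i):])"
      unfolding R_def by (rule degree_smult_le)
    also have "\<dots> \<le> card {..<n-l}" by (rule degree_prod_lin) simp
    finally show ?thesis by simp
  qed
  define A where "A = (\<lambda>m. 1 / q ^ m) ` {0..n}"
  have inj: "inj_on (\<lambda>m. 1 / q ^ m) {0..n}"
  proof (rule inj_onI)
    fix a b assume a: "a \<in> {0..n}" and b: "b \<in> {0..n}" and e: "1 / q ^ a = 1 / q ^ b"
    have e2: "q ^ a = q ^ b" using e q by (simp add: divide_inverse)
    show "a = b"
    proof (rule ccontr)
      assume "a \<noteq> b"
      then consider "a < b" | "b < a" by linarith
      then show False
      proof cases
        case 1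
        have "q ^ b = q ^ a * q ^ (b - a)" using 1 by (simp add: power_add[symmetric])
        then have "q ^ (b - a) = 1" using e2 q by simp
        moreover have "1 \<le> b - a" "b - a \<le> n" using 1 b by auto
        ultimately show False using qpow_ne1[OF Qn] by blast
      next
        case 2
        have "q ^ a = q ^ b * q ^ (a - b)" using 2 by (simp add: power_add[symmetric])
        then have "q ^ (a - b) = 1" using e2 q by simp
        moreover have "1 \<le> a - b" "a - b \<le> n" using 2 a by auto
        ultimately show False using qpow_ne1[OF Qn] by blast
      qed
    qed
  qed
  have cardA: "card A = Suc n" unfolding A_def using card_image[OF inj] by simp
  have roots: "poly L y = poly R y" if y: "y \<in> A" for y
  proof -
    obtain m where m: "m \<in> {0..n}" and ym: "y = 1 / q ^ m" using y unfolding A_def by blast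
    have "poly L y = c m * (\<Prod>j\<in>{0..n}-{m}. (1 - y * q ^ j))
          + (\<Sum>k\<in>{0..n}-{m}. c k * (\<Prod>j\<in>{0..n}-{k}. (1 - y * q ^ j)))"
      unfolding polyL using m by (simp add: sum.remove)
    also have "(\<Sum>k\<in>{0..n}-{m}. c k * (\<Prod>j\<in>{0..n}-{k}. (1 - y * q ^ j))) = 0"
    proof (rule sum.neutral, rule ballI)
      fix k assume k: "k \<in> {0..n}-{m}"
      have "(\<Prod>j\<in>{0..n}-{k}. (1 - y * q ^ j)) = 0"
        apply (rule prod_zero) using k m q by (auto simp: ym intro!: bexI[of _ m])
      then show "c k * (\<Prod>j\<in>{0..n}-{k}. (1 - y * q ^ j)) = 0" by simp
    qed
    also have "(\<Prod>j\<in>{0..n}-{m}. (1 - y * q ^ j)) = (\<Prod>j\<in>{0..n}-{m}. (1 - q ^ j / q ^ m))"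
      by (simp add: ym)
    also have "c m * \<dots> + 0 = qpoch q q n * qpoch (z / q ^ m) q (n - l) * qpoch (z / q ^ l) q l"
      using residue[OF q z _ ln Qn, of m] m unfolding c_def by simp
    also have "\<dots> = poly R y"
      unfolding polyR qpoch_def by (simp add: ym mult_ac)
    finally show ?thesis .
  qed
  have LR: "L = R"
    by (rule poly_eqI_degree[OF roots]) (use cardA degL degR in auto)
  have Xsplit: "qpoch x q (Suc n) = (1 - x * q ^ k) * (\<Prod>j\<in>{0..n}-{k}. (1 - x * q ^ j))"
    if k: "k \<in> {0..n}" for k
  proof -
    have "qpoch x q (Suc n) = (\<Prod>j\<in>{0..n}. (1 - x * q ^ j))"
      unfolding qpoch_def by (simp add: atLeast0AtMost lessThan_Suc_atMost)
    also have "\<dots> = (1 - x * q ^ k) * (\<Prod>j\<in>{0..n}-{k}. (1 - x * q ^ j))"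
      using k by (simp add: prod.remove)
    finally show ?thesis .
  qed
  have "(\<Sum>k=0..n. qbinom q n k * (qpoch (q / z) q k * qpoch (z / q ^ l) q (n - k))
            / (1 - x * q ^ k) * z ^ k)
      = (\<Sum>k=0..n. c k * (\<Prod>j\<in>{0..n}-{k}. (1 - x * q ^ j)) / qpoch x q (Suc n))"
  proof (rule sum.cong[OF refl])
    fix k assume k: "k \<in> {0..n}"
    have ne: "1 - x * q ^ k \<noteq> 0" "(\<Prod>j\<in>{0..n}-{k}. (1 - x * q ^ j)) \<noteq> 0"
      using Xn Xsplit[OF k] by auto
    show "qbinom q n k * (qpoch (q / z) q k * qpoch (z / q ^ l) q (n - k)) / (1 - x * q ^ k) * z ^ k
        = c k * (\<Prod>j\<in>{0..n}-{k}. (1 - x * q ^ j)) / qpoch x q (Suc n)"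
      unfolding Xsplit[OF k] c_def using ne by (simp add: field_simps)
  qed
  also have "\<dots> = poly L x / qpoch x q (Suc n)"
    unfolding polyL by (simp add: sum_divide_distrib)
  also have "\<dots> = poly R x / qpoch x q (Suc n)" using LR by simp
  also have "\<dots> = qpoch q q n * qpoch (x * z) q (n - l) * qpoch (z / q ^ l) q l / qpoch x q (Suc n)"
    unfolding polyR qpoch_def by (simp add: mult_ac)
  finally show ?thesis .
qed

end
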